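(* Let $n\ge1$. Every $\mathbf A\in\mathsf{PMV}_n$ embeds into the Priestley power of its distributive skeleton. That is, there is an injective homomorphism $\mathbf A\hookrightarrow\mathfrak P\mathfrak S(\mathbf A)=\mathbf{P\L}_n[\mathfrak S(\mathbf A)]$; it is the unit of the adjunction $\mathfrak S\dashv\mathfrak P$.
   Context: For $n\ge 1$, the algebra $\mathbf{P\L}_n=\langle\{0,\tfrac1n,\dots,1\},\min,\max,\odot,\oplus,0,1\rangle$ has $x\odot y=\max\{0,x+y-1\}$ and $x\oplus y=\min\{1,x+y\}$. $\mathsf{PMV}_n$ is the variety it generates. - The distributive skeleton is $\mathfrak S(\mathbf A)=\langle\{a\in A:a\oplus a=a\},\wedge,\vee,0,1\rangle$, a bounded distributive lattice. - For a bounded distributive lattice $\mathbf L$, the Priestley power $\mathbf{P\L}_n[\mathbf L]$ is the algebra, under pointwise operations, of continuous order-preserving maps from the Priestley dual space $\mathsf{DL}(\mathbf L,\mathbf 2)$ to the discrete ordered set $\langle\{0,\tfrac1n,\dots,1\},\le\rangle$. The dual space carries the pointwise order and product topology. - $\mathfrak P(\mathbf L)=\mathbf{P\L}_n[\mathbf L]$ defines a functor $\mathsf{DL}\to\mathsf{PMV}_n$ that is right adjoint to $\mathfrak S$. *)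

theory Defs
  imports "HOL-Analysis.Analysis"
begin

record 'a pmv_alg =
  carrier :: "'a set"
  meet :: "'a \<Rightarrow> 'a \<Rightarrow> 'a"
  join :: "'a \<Rightarrow> 'a \<Rightarrow> 'a"
  odot :: "'a \<Rightarrow> 'a \<Rightarrow> 'a"
  oplus :: "'a \<Rightarrow> 'a \<Rightarrow> 'a"
  zero :: 'a
  one :: 'a

definition pmv_structure :: "'a pmv_alg \<Rightarrow> bool" where
  "pmv_structure A \<longleftrightarrow>
     zero A \<in> carrier A \<and> one A \<in> carrier A \<and>
     (\<forall>x\<in>carrier A. \<forall>y\<in>carrier A.
        meet A x y \<in> carrier A \<and> join A x y \<in> carrier A \<and>
        odot A x y \<in> carrier A \<and> oplus A x y \<in> carrier A)"

definition PL :: "nat \<Rightarrow> real pmv_alg" where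
  "PL n = \<lparr> carrier = {real k / real n | k. k \<le> n},
            meet = min, join = max,
            odot = (\<lambda>x y. max 0 (x + y - 1)),
            oplus = (\<lambda>x y. min 1 (x + y)),
            zero = 0, one = 1 \<rparr>"

datatype pterm = PVar nat | PMeet pterm pterm | PJoin pterm pterm
  | POdot pterm pterm | POplus pterm pterm | PZero | POne

fun peval :: "'a pmv_alg \<Rightarrow> (nat \<Rightarrow> 'a) \<Rightarrow> pterm \<Rightarrow> 'a" where
  "peval A v (PVar i) = v i"
| "peval A v (PMeet s t) = meet A (peval A v s) (peval A v t)"
| "peval A v (PJoin s t) = join A (peval A v s) (peval A v t)"
| "peval A v (POdot s t) = odot A (peval A v s) (peval A v t)"
| "peval A v (POplus s t) = oplus A (peval A v s) (peval A v t)"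
| "peval A v PZero = zero A"
| "peval A v POne = one A"

definition satisfies :: "'a pmv_alg \<Rightarrow> pterm \<Rightarrow> pterm \<Rightarrow> bool" where
  "satisfies A s t \<longleftrightarrow>
     (\<forall>v. (\<forall>i. v i \<in> carrier A) \<longrightarrow> peval A v s = peval A v t)"

text \<open>PMV_n = HSP(PL_n) = Mod(Id(PL_n)) (Birkhoff).\<close>
definition PMV :: "nat \<Rightarrow> 'a pmv_alg set" where
  "PMV n = {A. pmv_structure A \<and>
                (\<forall>s t. satisfies (PL n) s t \<longrightarrow> satisfies A s t)}"

definition pmv_hom :: "'a pmv_alg \<Rightarrow> 'b pmv_alg \<Rightarrow> ('a \<Rightarrow> 'b) \<Rightarrow> bool" where
  "pmv_hom A B h \<longleftrightarrow>
     (\<forall>x\<in>carrier A. h x \<in> carrier B) \<and>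
     h (zero A) = zero B \<and> h (one A) = one B \<and>
     (\<forall>x\<in>carrier A. \<forall>y\<in>carrier A.
        h (meet A x y) = meet B (h x) (h y) \<and>
        h (join A x y) = join B (h x) (h y) \<and>
        h (odot A x y) = odot B (h x) (h y) \<and>
        h (oplus A x y) = oplus B (h x) (h y))"

record 'a bdl =
  lcarrier :: "'a set"
  lmeet :: "'a \<Rightarrow> 'a \<Rightarrow> 'a"
  ljoin :: "'a \<Rightarrow> 'a \<Rightarrow> 'a"
  lbot :: 'a
  ltop :: 'a

definition skeleton :: "'a pmv_alg \<Rightarrow> 'a bdl" where
  "skeleton A = \<lparr> lcarrier = {a\<in>carrier A. oplus A a a = a},
                  lmeet = meet A, ljoin = join A, lbot = zero A, ltop = one A \<rparr>"

text \<open>Points of the dual space DL(L,2): bounded lattice homomorphisms L \<rightarrow> 2,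
  represented as functions in the product space 2^L (extensional on L).\<close>
definition dual_space :: "'a bdl \<Rightarrow> ('a \<Rightarrow> bool) set" where
  "dual_space L = {x \<in> extensional (lcarrier L).
      x (lbot L) = False \<and> x (ltop L) = True \<and>
      (\<forall>a\<in>lcarrier L. \<forall>b\<in>lcarrier L.
         x (lmeet L a b) = (x a \<and> x b) \<and> x (ljoin L a b) = (x a \<or> x b))}"

definition dual_topology :: "'a bdl \<Rightarrow> ('a \<Rightarrow> bool) topology" where
  "dual_topology L = subtopology (product_topology (\<lambda>_. discrete_topology UNIV) (lcarrier L))
                                 (dual_space L)"

definition dual_le :: "'a bdl \<Rightarrow> ('a \<Rightarrow> bool) \<Rightarrow> ('a \<Rightarrow> bool) \<Rightarrow> bool" where
  "dual_le L x y \<longleftrightarrow> (\<forall>a\<in>lcarrier L. x a \<longrightarrow> y a)"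

definition priestley_power :: "nat \<Rightarrow> 'a bdl \<Rightarrow> (('a \<Rightarrow> bool) \<Rightarrow> real) pmv_alg" where
  "priestley_power n L =
     (let X = dual_space L in
     \<lparr> carrier = {f \<in> extensional X.
          continuous_map (dual_topology L) (discrete_topology (carrier (PL n))) f \<and>
          (\<forall>x\<in>X. \<forall>y\<in>X. dual_le L x y \<longrightarrow> f x \<le> f y)},
       meet = (\<lambda>f g. \<lambda>x\<in>X. meet (PL n) (f x) (g x)),
       join = (\<lambda>f g. \<lambda>x\<in>X. join (PL n) (f x) (g x)),
       odot = (\<lambda>f g. \<lambda>x\<in>X. odot (PL n) (f x) (g x)),
       oplus = (\<lambda>f g. \<lambda>x\<in>X. oplus (PL n) (f x) (g x)),
       zero = (\<lambda>x\<in>X. zero (PL n)),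
       one = (\<lambda>x\<in>X. one (PL n)) \<rparr>)"

text \<open>The element of PL_n[S(A)] corresponding to an idempotent e under
  S(PL_n[L]) = L: the map x \<mapsto> x(e) (0 or 1).\<close>
definition idem_point :: "'a pmv_alg \<Rightarrow> 'a \<Rightarrow> ('a \<Rightarrow> bool) \<Rightarrow> real" where
  "idem_point A e = (\<lambda>x\<in>dual_space (skeleton A). if x e then 1 else 0)"

end

theory Submission
  imports Defs
begin

fun gev :: "nat \<Rightarrow> (nat \<Rightarrow> nat) \<Rightarrow> pterm \<Rightarrow> nat" where
  "gev n w (PVar i) = w i"
| "gev n w (PMeet s t) = min (gev n w s) (gev n w t)"
| "gev n w (PJoin s t) = max (gev n w s) (gev n w t)"
| "gev n w (POdot s t) = gev n w s + gev n w t - n"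
| "gev n w (POplus s t) = min n (gev n w s + gev n w t)"
| "gev n w PZero = 0"
| "gev n w POne = n"

lemma grid_oplus:
  assumes "n \<ge> 1"
  shows "min 1 (real a / real n + real b / real n) = real (min n (a + b)) / real n"
proof (cases "a + b \<le> n")
  case True
  then have "real a / real n + real b / real n \<le> 1" using assms
    by (simp add: add_divide_distrib[symmetric] divide_le_eq)
  then show ?thesis using True by (simp add: add_divide_distrib)
next
  case False
  then have "real a / real n + real b / real n \<ge> 1" using assms
    by (simp add: add_divide_distrib[symmetric] le_divide_eq)
  then show ?thesis using False assms by simp
qed

lemma grid_odot:
  assumes "n \<ge> 1"
  shows "max 0 (real a / real n + real b / real n - 1) = real (a + b - n) / real n"
proof (cases "a + b \<ge> n")
  case True
  have "real (a + b - n) / real n = real a / real n + real b / real n - 1"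
    using True assms by (simp add: of_nat_diff field_simps)
  moreover have "real a / real n + real b / real n - 1 \<ge> 0" using True assms
    by (simp add: add_divide_distrib[symmetric] le_divide_eq)
  ultimately show ?thesis by simp
next
  case False
  then have "real a / real n + real b / real n \<le> 1" using assms
    by (simp add: add_divide_distrib[symmetric] divide_le_eq)
  then show ?thesis using False assms by simp
qed

lemma grid_min:
  assumes "n \<ge> 1"
  shows "min (real a / real n) (real b / real n) = real (min a b) / real n"
    and "max (real a / real n) (real b / real n) = real (max a b) / real n"
proof -
  have np: "real n > 0" using assms by simp
  have "real (min a b) = min (real a) (real b)" "real (max a b) = max (real a) (real b)" by auto
  then show "min (real a / real n) (real b / real n) = real (min a b) / real n"
    "max (real a / real n) (real b / real n) = real (max a b) / real n"
    using np by (simp_all add: min_divide_distrib_right max_divide_distrib_right)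
qed

lemma peval_PL_gev:
  assumes "n \<ge> 1" "\<forall>i. w i \<le> n"
  shows "peval (PL n) (\<lambda>i. real (w i) / real n) s = real (gev n w s) / real n \<and> gev n w s \<le> n"
proof (induction s)
  case (POplus s t)
  then show ?case using grid_oplus[OF assms(1)] by (simp add: PL_def)
next
  case (POdot s t)
  then show ?case using grid_odot[OF assms(1)] by (simp add: PL_def) linarith
next
  case (PMeet s t)
  then show ?case using grid_min[OF assms(1)] by (simp add: PL_def min_le_iff_disj le_max_iff_disj)
next
  case (PJoin s t)
  then show ?case using grid_min[OF assms(1)] by (simp add: PL_def min_le_iff_disj le_max_iff_disj)
qed (use assms in \<open>auto simp: PL_def\<close>)

lemma sat_PL:
  assumes "n \<ge> 1" "\<And>w. \<forall>i. w i \<le> n \<Longrightarrow> gev n w s = gev n w t"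
  shows "satisfies (PL n) s t"
  unfolding satisfies_def
proof (intro allI impI)
  fix v :: "nat \<Rightarrow> real" assume v: "\<forall>i. v i \<in> carrier (PL n)"
  then have "\<forall>i. \<exists>k. k \<le> n \<and> v i = real k / real n" by (auto simp: PL_def)
  then obtain w where w: "\<forall>i. w i \<le> n \<and> v i = real (w i) / real n" by metis
  then have vw: "v = (\<lambda>i. real (w i) / real n)" by auto
  have wn: "\<forall>i. w i \<le> n" using w by auto
  show "peval (PL n) v s = peval (PL n) v t"
    unfolding vw using peval_PL_gev[OF assms(1) wn, of s] peval_PL_gev[OF assms(1) wn, of t]
      assms(2)[OF wn] by simp
qed

lemma PMV_eq: "A \<in> PMV n \<Longrightarrow> satisfies (PL n) s t \<Longrightarrow> (\<And>i. v i \<in> carrier A) \<Longrightarrow> peval A v s = peval A v t"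
  by (simp add: PMV_def satisfies_def)

lemma peval_closed: "pmv_structure A \<Longrightarrow> (\<And>i. v i \<in> carrier A) \<Longrightarrow> peval A v s \<in> carrier A"
  by (induction s) (auto simp: pmv_structure_def)

fun bis :: "nat \<Rightarrow> nat \<Rightarrow> pterm \<Rightarrow> pterm" where
  "bis 0 s u = u"
| "bis (Suc d) s u = (if even s then POplus (bis d (s div 2) u) (bis d (s div 2) u)
                      else POdot (bis d (s div 2) u) (bis d (s div 2) u))"

fun nmul :: "nat \<Rightarrow> pterm \<Rightarrow> pterm" where
  "nmul 0 u = PZero"
| "nmul (Suc k) u = (if k = 0 then u else POplus u (nmul k u))"

definition sidx :: "nat \<Rightarrow> nat \<Rightarrow> nat" where
  "sidx n m = ((m - 1) * 2^n + n - 1) div n"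

definition thr :: "nat \<Rightarrow> nat \<Rightarrow> pterm \<Rightarrow> pterm" where
  "thr n m u = (if m = 0 then POne else if n < m then PZero else nmul n (bis n (sidx n m) u))"

lemma clip_double:
  fixes u :: real
  shows "min 1 (max 0 (min 1 u) + max 0 (min 1 u)) = max 0 (min 1 (2 * u))"
    and "max 0 (max 0 (min 1 u) + max 0 (min 1 u) - 1) = max 0 (min 1 (2 * u - 1))"
  by (auto simp: min_def max_def)

lemma bis_PL:
  assumes "0 \<le> y" "y \<le> 1" "peval (PL n) v u = y"
  shows "s < 2^d \<Longrightarrow> peval (PL n) v (bis d s u) = max 0 (min 1 (2^d * y - real s))"
proof (induction d arbitrary: s)
  case 0
  then show ?case using assms by simp
next
  case (Suc d)
  have lt: "s div 2 < 2^d" using Suc.prems by simp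
  define c where "c = peval (PL n) v (bis d (s div 2) u)"
  define z where "z = 2^d * y - real (s div 2)"
  have IH: "c = max 0 (min 1 z)" unfolding c_def z_def by (rule Suc.IH[OF lt])
  show ?case
  proof (cases "even s")
    case True
    then have s2: "s = 2 * (s div 2)" by presburger
    have rs: "real s = 2 * real (s div 2)" using arg_cong[OF s2, of real] by simp
    have e: "2 ^ Suc d * y - real s = 2 * z" unfolding z_def using rs by (simp add: algebra_simps)
    have "peval (PL n) v (bis (Suc d) s u) = min 1 (c + c)" using True unfolding c_def by (simp add: PL_def)
    also have "\<dots> = max 0 (min 1 (2 * z))" unfolding IH by (rule clip_double(1))
    finally show ?thesis unfolding e .
  next
    case False
    then have s2: "s = 2 * (s div 2) + 1" by presburger
    have rs: "real s = 2 * real (s div 2) + 1" using arg_cong[OF s2, of real] by simp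
    have e: "2 ^ Suc d * y - real s = 2 * z - 1" unfolding z_def using rs by (simp add: algebra_simps)
    have "peval (PL n) v (bis (Suc d) s u) = max 0 (c + c - 1)" using False unfolding c_def by (simp add: PL_def)
    also have "\<dots> = max 0 (min 1 (2 * z - 1))" unfolding IH by (rule clip_double(2))
    finally show ?thesis unfolding e .
  qed
qed

lemma nmul_PL:
  assumes "0 \<le> y" "y \<le> 1" "peval (PL n) v u = y"
  shows "peval (PL n) v (nmul k u) = min 1 (real k * y)"
proof (induction k)
  case 0
  then show ?case by (simp add: PL_def)
next
  case (Suc k)
  show ?case
  proof (cases "k = 0")
    case True
    then show ?thesis using assms by simp
  next
    case False
    have "peval (PL n) v (nmul (Suc k) u) = min 1 (y + min 1 (real k * y))"
      using False Suc assms(3) by (simp add: PL_def)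
    also have "\<dots> = min 1 (real (Suc k) * y)" using assms(1)
      by (simp add: min_def algebra_simps)
    finally show ?thesis .
  qed
qed

lemma sidx_bounds:
  assumes "1 \<le> m" "m \<le> n"
  shows "(m - 1) * 2^n \<le> n * sidx n m" "n * sidx n m < m * 2^n"
proof -
  define N where "N = (m - 1) * 2^n + n - 1"
  have n0: "n > 0" using assms by simp
  have a: "n * sidx n m \<le> N" unfolding sidx_def N_def[symmetric] by simp
  have b: "N < n * sidx n m + n" unfolding sidx_def N_def[symmetric]
    using div_mult_mod_eq[of N n] mod_less_divisor[OF n0, of N] by (metis add_less_cancel_left mult.commute)
  show "(m - 1) * 2^n \<le> n * sidx n m" using b unfolding N_def by linarith
  have ne: "n < 2^n" by (rule less_exp)
  obtain k where k: "m = Suc k" using assms by (cases m) auto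
  have c: "k*2^n + n - 1 < 2^n + k*2^n" using ne by linarith
  have e1: "m - 1 = k" "m * 2^n = 2^n + k*2^n" using k by simp_all
  have a2: "n * sidx n m \<le> k*2^n + n - 1" using a unfolding N_def e1(1) .
  show "n * sidx n m < m * 2^n" using a2 c e1(2) by linarith
qed


lemma thr_PL:
  assumes n1: "n \<ge> 1" and j: "j \<le> n" and u: "peval (PL n) v u = real j / real n"
  shows "peval (PL n) v (thr n m u) = (if m \<le> j then 1 else 0)"
proof -
  consider "m = 0" | "n < m" | "1 \<le> m \<and> m \<le> n" by linarith
  then show ?thesis
  proof cases
    case 1 then show ?thesis by (simp add: thr_def PL_def)
  next
    case 2 then show ?thesis using j by (simp add: thr_def PL_def)
  next
    case 3
    define s where "s = sidx n m"
    have sb1: "(m - 1) * 2^n \<le> n * s" and sb2: "n * s < m * 2^n"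
      using sidx_bounds[of m n] 3 unfolding s_def by auto
    have "m * 2^n \<le> n * (2::nat)^n" using 3 by simp
    then have "n * s < n * 2^n" using sb2 by linarith
    then have slt: "s < 2^n" by simp
    define y where "y = real j / real n"
    have np: "real n > 0" using n1 by simp
    have y0: "0 \<le> y" and y1: "y \<le> 1" unfolding y_def using j np by (auto simp: divide_le_eq)
    define z where "z = 2^n * y - real s"
    have zn: "z * real n = 2^n * real j - real n * real s" unfolding z_def y_def using np
      by (simp add: field_simps)
    define c where "c = max 0 (min 1 z)"
    have bc: "peval (PL n) v (bis n s u) = c" unfolding c_def z_def
      using bis_PL[OF y0 y1 u[folded y_def] slt] .
    have c0: "0 \<le> c" "c \<le> 1" unfolding c_def by auto
    have val: "peval (PL n) v (thr n m u) = min 1 (real n * c)"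
      using 3 nmul_PL[OF c0 bc, of n] unfolding thr_def s_def by simp
    show ?thesis
    proof (cases "m \<le> j")
      case True
      have "m * 2^n \<le> j * 2^n" using True by simp
      then have "n * s + 1 \<le> j * 2^n" using sb2 by linarith
      then have "n * s + 1 \<le> 2^n * j" by (simp add: mult.commute)
      then have "real (n * s + 1) \<le> real (2^n * j)" by (simp only: of_nat_le_iff)
      then have "real n * real s + 1 \<le> 2^n * real j" by simp
      then have "z * real n \<ge> 1" using zn by simp
      then have "z \<ge> 1 / real n" using np by (simp add: divide_le_eq)
      moreover have "1 / real n \<le> 1" using n1 by simp
      ultimately have "c \<ge> 1 / real n" unfolding c_def by auto
      then have "real n * c \<ge> 1" using np by (simp add: divide_le_eq mult.commute)
      then show ?thesis using val True by simp
    next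
      case False
      then have "j \<le> m - 1" by simp
      then have "j * 2^n \<le> (m - 1) * 2^n" by simp
      then have "j * 2^n \<le> n * s" using sb1 by linarith
      then have "2^n * j \<le> n * s" by (simp add: mult.commute)
      then have "real (2^n * j) \<le> real (n * s)" by (simp only: of_nat_le_iff)
      then have "2^n * real j \<le> real n * real s" by simp
      then have "z * real n \<le> 0" using zn by simp
      then have "z \<le> 0" using np by (simp add: mult_le_0_iff)
      then have "c = 0" unfolding c_def by simp
      then show ?thesis using val False by simp
    qed
  qed
qed

lemma gev_thr:
  assumes "n \<ge> 1" "\<forall>i. w i \<le> n"
  shows "gev n w (thr n m u) = (if m \<le> gev n w u then n else 0)"
proof -
  have np: "real n > 0" using assms by simp
  have A1: "peval (PL n) (\<lambda>i. real (w i) / real n) (thr n m u) = real (gev n w (thr n m u)) / real n"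
    using peval_PL_gev[OF assms] by blast
  have A2: "peval (PL n) (\<lambda>i. real (w i) / real n) u = real (gev n w u) / real n" "gev n w u \<le> n"
    using peval_PL_gev[OF assms] by blast+
  have "real (gev n w (thr n m u)) / real n = (if m \<le> gev n w u then 1 else 0)"
    using thr_PL[OF assms(1) A2(2) A2(1), of m] A1 by simp
  then show ?thesis using np by (auto split: if_splits simp: divide_eq_1_iff)
qed

lemma gev_nmul:
  assumes "gev n w u \<le> n"
  shows "gev n w (nmul k u) = min n (k * gev n w u)"
  using assms by (induction k) auto

lemma bis_comp: "peval A v (bis d s u) = peval A (\<lambda>_. peval A v u) (bis d s (PVar 0))"
  by (induction d arbitrary: s) auto

lemma nmul_comp: "peval A v (nmul k u) = peval A (\<lambda>_. peval A v u) (nmul k (PVar 0))"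
  by (induction k) auto

definition tA :: "'a pmv_alg \<Rightarrow> nat \<Rightarrow> nat \<Rightarrow> 'a \<Rightarrow> 'a" where
  "tA A n m a = peval A (\<lambda>_. a) (thr n m (PVar 0))"

lemma thr_comp: "peval A v (thr n m u) = tA A n m (peval A v u)"
proof -
  define s where "s = sidx n m"
  have "peval A v (nmul n (bis n s u)) = peval A (\<lambda>_. peval A v (bis n s u)) (nmul n (PVar 0))"
    by (rule nmul_comp)
  also have "\<dots> = peval A (\<lambda>_. peval A (\<lambda>_. peval A v u) (bis n s (PVar 0))) (nmul n (PVar 0))"
    by (simp add: bis_comp[of A v n s u])
  also have "\<dots> = peval A (\<lambda>_. peval A v u) (nmul n (bis n s (PVar 0)))"
    by (rule nmul_comp[symmetric])
  finally show ?thesis unfolding tA_def thr_def s_def by simp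
qed


definition v2 :: "'a \<Rightarrow> 'a \<Rightarrow> nat \<Rightarrow> 'a" where "v2 a b = (\<lambda>i. if i = 0 then a else b)"
definition v3 :: "'a \<Rightarrow> 'a \<Rightarrow> 'a \<Rightarrow> nat \<Rightarrow> 'a" where
  "v3 a b c = (\<lambda>i. if i = 0 then a else if i = 1 then b else c)"

locale pmvn =
  fixes A :: "'a pmv_alg" and n :: nat
  assumes inPMV: "A \<in> PMV n" and n1: "n \<ge> 1"
begin

abbreviation th where "th m a \<equiv> tA A n m a"

lemma struct: "pmv_structure A" using inPMV by (simp add: PMV_def)

lemma ident:
  assumes "\<And>w. \<forall>i. w i \<le> n \<Longrightarrow> gev n w s = gev n w t" "\<And>i. v i \<in> carrier A"
  shows "peval A v s = peval A v t"
  using PMV_eq[OF inPMV sat_PL[OF n1 assms(1)] assms(2)] .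

lemma v2_in: "a \<in> carrier A \<Longrightarrow> b \<in> carrier A \<Longrightarrow> v2 a b i \<in> carrier A"
  by (simp add: v2_def)
lemma v3_in: "a \<in> carrier A \<Longrightarrow> b \<in> carrier A \<Longrightarrow> c \<in> carrier A \<Longrightarrow> v3 a b c i \<in> carrier A"
  by (simp add: v3_def)

lemma cl:
  shows "zero A \<in> carrier A" "one A \<in> carrier A"
    and "a \<in> carrier A \<Longrightarrow> b \<in> carrier A \<Longrightarrow> meet A a b \<in> carrier A"
    and "a \<in> carrier A \<Longrightarrow> b \<in> carrier A \<Longrightarrow> join A a b \<in> carrier A"
    and "a \<in> carrier A \<Longrightarrow> b \<in> carrier A \<Longrightarrow> oplus A a b \<in> carrier A"
    and "a \<in> carrier A \<Longrightarrow> b \<in> carrier A \<Longrightarrow> odot A a b \<in> carrier A"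
  using struct by (auto simp: pmv_structure_def)

lemma th_closed: "a \<in> carrier A \<Longrightarrow> th m a \<in> carrier A"
  unfolding tA_def by (rule peval_closed[OF struct]) simp

lemma th0: "th 0 a = one A" by (simp add: tA_def thr_def)
lemma th_big: "n < m \<Longrightarrow> th m a = zero A" by (simp add: tA_def thr_def)


lemma th_idem: assumes "a \<in> carrier A" shows "oplus A (th m a) (th m a) = th m a"
proof -
  have "peval A (v2 a a) (POplus (thr n m (PVar 0)) (thr n m (PVar 0))) = peval A (v2 a a) (thr n m (PVar 0))"
    by (rule ident; simp add: gev_thr[OF n1] assms v2_def v3_def; insert assms; auto simp: min_def max_def)
  then show ?thesis by (simp add: thr_comp v2_def)
qed

lemma th_mono: assumes "a \<in> carrier A" "k \<le> m" shows "meet A (th m a) (th k a) = th m a"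
proof -
  have "peval A (v2 a a) (PMeet (thr n m (PVar 0)) (thr n k (PVar 0))) = peval A (v2 a a) (thr n m (PVar 0))"
    by (rule ident; simp add: gev_thr[OF n1] assms v2_def v3_def; insert assms; auto simp: min_def max_def)
  then show ?thesis by (simp add: thr_comp v2_def)
qed

lemma th_meet: assumes "a \<in> carrier A" "b \<in> carrier A" shows "th m (meet A a b) = meet A (th m a) (th m b)"
proof -
  have "peval A (v2 a b) (thr n m (PMeet (PVar 0) (PVar 1))) = peval A (v2 a b) (PMeet (thr n m (PVar 0)) (thr n m (PVar 1)))"
    by (rule ident; simp add: gev_thr[OF n1] assms v2_def v3_def; insert assms; auto simp: min_def max_def)
  then show ?thesis by (simp add: thr_comp v2_def)
qed

lemma th_join: assumes "a \<in> carrier A" "b \<in> carrier A" shows "th m (join A a b) = join A (th m a) (th m b)"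
proof -
  have "peval A (v2 a b) (thr n m (PJoin (PVar 0) (PVar 1))) = peval A (v2 a b) (PJoin (thr n m (PVar 0)) (thr n m (PVar 1)))"
    by (rule ident; simp add: gev_thr[OF n1] assms v2_def v3_def; insert assms; auto simp: min_def max_def)
  then show ?thesis by (simp add: thr_comp v2_def)
qed

lemma th_E1: assumes "a \<in> carrier A" "b \<in> carrier A" "i + j \<le> n"
  shows "meet A (meet A (th i a) (th j b)) (th (i+j) (oplus A a b)) = meet A (th i a) (th j b)"
proof -
  have "peval A (v2 a b) (PMeet (PMeet (thr n i (PVar 0)) (thr n j (PVar 1))) (thr n (i+j) (POplus (PVar 0) (PVar 1))))
      = peval A (v2 a b) (PMeet (thr n i (PVar 0)) (thr n j (PVar 1)))"
    by (rule ident; simp add: gev_thr[OF n1] assms v2_def v3_def; insert assms; auto simp: min_def max_def)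
  then show ?thesis by (simp add: thr_comp v2_def)
qed

lemma th_E2: assumes "a \<in> carrier A" "b \<in> carrier A" "p + q < m"
  shows "meet A (th m (oplus A a b)) (join A (th (p+1) a) (th (q+1) b)) = th m (oplus A a b)"
proof -
  have "peval A (v2 a b) (PMeet (thr n m (POplus (PVar 0) (PVar 1))) (PJoin (thr n (p+1) (PVar 0)) (thr n (q+1) (PVar 1))))
      = peval A (v2 a b) (thr n m (POplus (PVar 0) (PVar 1)))"
    by (rule ident; simp add: gev_thr[OF n1] assms v2_def v3_def; insert assms; auto simp: min_def max_def)
  then show ?thesis by (simp add: thr_comp v2_def)
qed

lemma th_F1: assumes "a \<in> carrier A" "b \<in> carrier A" "m + n \<le> i + j"
  shows "meet A (meet A (th i a) (th j b)) (th m (odot A a b)) = meet A (th i a) (th j b)"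
proof -
  have "peval A (v2 a b) (PMeet (PMeet (thr n i (PVar 0)) (thr n j (PVar 1))) (thr n m (POdot (PVar 0) (PVar 1))))
      = peval A (v2 a b) (PMeet (thr n i (PVar 0)) (thr n j (PVar 1)))"
    by (rule ident; simp add: gev_thr[OF n1] assms v2_def v3_def; insert assms; auto simp: min_def max_def)
  then show ?thesis by (simp add: thr_comp v2_def)
qed

lemma th_F2: assumes "a \<in> carrier A" "b \<in> carrier A" "p + q < m + n" "1 \<le> m"
  shows "meet A (th m (odot A a b)) (join A (th (p+1) a) (th (q+1) b)) = th m (odot A a b)"
proof -
  have "peval A (v2 a b) (PMeet (thr n m (POdot (PVar 0) (PVar 1))) (PJoin (thr n (p+1) (PVar 0)) (thr n (q+1) (PVar 1))))
      = peval A (v2 a b) (thr n m (POdot (PVar 0) (PVar 1)))"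
    by (rule ident; simp add: gev_thr[OF n1] assms v2_def v3_def; insert assms; auto simp: min_def max_def)
  then show ?thesis by (simp add: thr_comp v2_def)
qed

lemma th_zero: assumes "a \<in> carrier A" "b \<in> carrier A" "1 \<le> m"
  shows "th m (zero A) = zero A"
proof -
  have "peval A (v2 a b) (thr n m PZero) = peval A (v2 a b) (PZero)"
    by (rule ident; simp add: gev_thr[OF n1] assms v2_def v3_def; insert assms; auto simp: min_def max_def)
  then show ?thesis by (simp add: thr_comp v2_def)
qed

lemma th_one: assumes "a \<in> carrier A" "b \<in> carrier A" "m \<le> n"
  shows "th m (one A) = one A"
proof -
  have "peval A (v2 a b) (thr n m POne) = peval A (v2 a b) (POne)"
    by (rule ident; simp add: gev_thr[OF n1] assms v2_def v3_def; insert assms; auto simp: min_def max_def)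
  then show ?thesis by (simp add: thr_comp v2_def)
qed

lemma th_th1: assumes "a \<in> carrier A" "b \<in> carrier A" "1 \<le> m" "m \<le> n"
  shows "th m (th 1 a) = th 1 a"
proof -
  have "peval A (v2 a b) (thr n m (thr n 1 (PVar 0))) = peval A (v2 a b) (thr n 1 (PVar 0))"
    by (rule ident; simp add: gev_thr[OF n1] assms v2_def v3_def; insert assms; auto simp: min_def max_def)
  then show ?thesis by (simp add: thr_comp v2_def)
qed

lemma meet_comm: assumes "a \<in> carrier A" "b \<in> carrier A" 
  shows "meet A a b = meet A b a"
proof -
  have "peval A (v2 a b) (PMeet (PVar 0) (PVar (Suc 0))) = peval A (v2 a b) (PMeet (PVar (Suc 0)) (PVar 0))"
    by (rule ident; simp add: gev_thr[OF n1] assms v2_def v3_def; insert assms; auto simp: min_def max_def)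
  then show ?thesis by (simp add: thr_comp v2_def)
qed

lemma join_comm: assumes "a \<in> carrier A" "b \<in> carrier A" 
  shows "join A a b = join A b a"
proof -
  have "peval A (v2 a b) (PJoin (PVar 0) (PVar (Suc 0))) = peval A (v2 a b) (PJoin (PVar (Suc 0)) (PVar 0))"
    by (rule ident; simp add: gev_thr[OF n1] assms v2_def v3_def; insert assms; auto simp: min_def max_def)
  then show ?thesis by (simp add: thr_comp v2_def)
qed

lemma meet_idem: assumes "a \<in> carrier A" "b \<in> carrier A" 
  shows "meet A a a = a"
proof -
  have "peval A (v2 a b) (PMeet (PVar 0) (PVar 0)) = peval A (v2 a b) (PVar 0)"
    by (rule ident; simp add: gev_thr[OF n1] assms v2_def v3_def; insert assms; auto simp: min_def max_def)
  then show ?thesis by (simp add: thr_comp v2_def)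
qed

lemma absorb_mj: assumes "a \<in> carrier A" "b \<in> carrier A" 
  shows "meet A a (join A a b) = a"
proof -
  have "peval A (v2 a b) (PMeet (PVar 0) (PJoin (PVar 0) (PVar (Suc 0)))) = peval A (v2 a b) (PVar 0)"
    by (rule ident; simp add: gev_thr[OF n1] assms v2_def v3_def; insert assms; auto simp: min_def max_def)
  then show ?thesis by (simp add: thr_comp v2_def)
qed

lemma absorb_jm: assumes "a \<in> carrier A" "b \<in> carrier A" 
  shows "join A a (meet A a b) = a"
proof -
  have "peval A (v2 a b) (PJoin (PVar 0) (PMeet (PVar 0) (PVar (Suc 0)))) = peval A (v2 a b) (PVar 0)"
    by (rule ident; simp add: gev_thr[OF n1] assms v2_def v3_def; insert assms; auto simp: min_def max_def)
  then show ?thesis by (simp add: thr_comp v2_def)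
qed

lemma absorb_jm2: assumes "a \<in> carrier A" "b \<in> carrier A" 
  shows "join A b (meet A a b) = b"
proof -
  have "peval A (v2 a b) (PJoin (PVar (Suc 0)) (PMeet (PVar 0) (PVar (Suc 0)))) = peval A (v2 a b) (PVar (Suc 0))"
    by (rule ident; simp add: gev_thr[OF n1] assms v2_def v3_def; insert assms; auto simp: min_def max_def)
  then show ?thesis by (simp add: thr_comp v2_def)
qed

lemma absorb_jj: assumes "a \<in> carrier A" "b \<in> carrier A" 
  shows "join A a (join A a b) = join A a b"
proof -
  have "peval A (v2 a b) (PJoin (PVar 0) (PJoin (PVar 0) (PVar (Suc 0)))) = peval A (v2 a b) (PJoin (PVar 0) (PVar (Suc 0)))"
    by (rule ident; simp add: gev_thr[OF n1] assms v2_def v3_def; insert assms; auto simp: min_def max_def)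
  then show ?thesis by (simp add: thr_comp v2_def)
qed

lemma absorb_jj2: assumes "a \<in> carrier A" "b \<in> carrier A" 
  shows "join A b (join A a b) = join A a b"
proof -
  have "peval A (v2 a b) (PJoin (PVar (Suc 0)) (PJoin (PVar 0) (PVar (Suc 0)))) = peval A (v2 a b) (PJoin (PVar 0) (PVar (Suc 0)))"
    by (rule ident; simp add: gev_thr[OF n1] assms v2_def v3_def; insert assms; auto simp: min_def max_def)
  then show ?thesis by (simp add: thr_comp v2_def)
qed

lemma meet_zero: assumes "a \<in> carrier A" "b \<in> carrier A" 
  shows "meet A (zero A) a = zero A"
proof -
  have "peval A (v2 a b) (PMeet PZero (PVar 0)) = peval A (v2 a b) (PZero)"
    by (rule ident; simp add: gev_thr[OF n1] assms v2_def v3_def; insert assms; auto simp: min_def max_def)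
  then show ?thesis by (simp add: thr_comp v2_def)
qed

lemma meet_one: assumes "a \<in> carrier A" "b \<in> carrier A" 
  shows "meet A a (one A) = a"
proof -
  have "peval A (v2 a b) (PMeet (PVar 0) POne) = peval A (v2 a b) (PVar 0)"
    by (rule ident; simp add: gev_thr[OF n1] assms v2_def v3_def; insert assms; auto simp: min_def max_def)
  then show ?thesis by (simp add: thr_comp v2_def)
qed

lemma skel_meet: assumes "a \<in> carrier A" "b \<in> carrier A" 
  shows "oplus A (meet A a b) (meet A a b) = meet A (oplus A a a) (oplus A b b)"
proof -
  have "peval A (v2 a b) (POplus (PMeet (PVar 0) (PVar (Suc 0))) (PMeet (PVar 0) (PVar (Suc 0)))) = peval A (v2 a b) (PMeet (POplus (PVar 0) (PVar 0)) (POplus (PVar (Suc 0)) (PVar (Suc 0))))"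
    by (rule ident; simp add: gev_thr[OF n1] assms v2_def v3_def; insert assms; auto simp: min_def max_def)
  then show ?thesis by (simp add: thr_comp v2_def)
qed

lemma skel_join: assumes "a \<in> carrier A" "b \<in> carrier A" 
  shows "oplus A (join A a b) (join A a b) = join A (oplus A a a) (oplus A b b)"
proof -
  have "peval A (v2 a b) (POplus (PJoin (PVar 0) (PVar (Suc 0))) (PJoin (PVar 0) (PVar (Suc 0)))) = peval A (v2 a b) (PJoin (POplus (PVar 0) (PVar 0)) (POplus (PVar (Suc 0)) (PVar (Suc 0))))"
    by (rule ident; simp add: gev_thr[OF n1] assms v2_def v3_def; insert assms; auto simp: min_def max_def)
  then show ?thesis by (simp add: thr_comp v2_def)
qed

lemma skel_zero: assumes "a \<in> carrier A" "b \<in> carrier A" 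
  shows "oplus A (zero A) (zero A) = zero A"
proof -
  have "peval A (v2 a b) (POplus PZero PZero) = peval A (v2 a b) (PZero)"
    by (rule ident; simp add: gev_thr[OF n1] assms v2_def v3_def; insert assms; auto simp: min_def max_def)
  then show ?thesis by (simp add: thr_comp v2_def)
qed

lemma skel_one: assumes "a \<in> carrier A" "b \<in> carrier A" 
  shows "oplus A (one A) (one A) = one A"
proof -
  have "peval A (v2 a b) (POplus POne POne) = peval A (v2 a b) (POne)"
    by (rule ident; simp add: gev_thr[OF n1] assms v2_def v3_def; insert assms; auto simp: min_def max_def)
  then show ?thesis by (simp add: thr_comp v2_def)
qed

lemma chain0: assumes "a \<in> carrier A" "b \<in> carrier A" 
  shows "join A a b = join A (meet A a b) (meet A (join A a b) (one A))"
proof -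
  have "peval A (v2 a b) (PJoin (PVar 0) (PVar (Suc 0))) = peval A (v2 a b) (PJoin (PMeet (PVar 0) (PVar (Suc 0))) (PMeet (PJoin (PVar 0) (PVar (Suc 0))) (POne)))"
    by (rule ident; simp add: gev_thr[OF n1] assms v2_def v3_def; insert assms; auto simp: min_def max_def)
  then show ?thesis by (simp add: thr_comp v2_def)
qed

lemma chainN: assumes "a \<in> carrier A" "b \<in> carrier A" 
  shows "meet A a b = join A (meet A a b) (meet A (join A a b) (zero A))"
proof -
  have "peval A (v2 a b) (PMeet (PVar 0) (PVar (Suc 0))) = peval A (v2 a b) (PJoin (PMeet (PVar 0) (PVar (Suc 0))) (PMeet (PJoin (PVar 0) (PVar (Suc 0))) (PZero)))"
    by (rule ident; simp add: gev_thr[OF n1] assms v2_def v3_def; insert assms; auto simp: min_def max_def)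
  then show ?thesis by (simp add: thr_comp v2_def)
qed

lemma chain1: assumes "a \<in> carrier A" "b \<in> carrier A" 
  shows "join A (meet A a b) (meet A (join A a b) (th (Suc k) (join A a b))) = join A (join A (meet A a b) (meet A (join A a b) (th k (meet A a b)))) (join A (meet A a b) (meet A (join A a b) (th (Suc k) (join A a b))))"
proof -
  have "peval A (v2 a b) (PJoin (PMeet (PVar 0) (PVar (Suc 0))) (PMeet (PJoin (PVar 0) (PVar (Suc 0))) (thr n (Suc k) (PJoin (PVar 0) (PVar (Suc 0)))))) = peval A (v2 a b) (PJoin (PJoin (PMeet (PVar 0) (PVar (Suc 0))) (PMeet (PJoin (PVar 0) (PVar (Suc 0))) (thr n k (PMeet (PVar 0) (PVar (Suc 0)))))) (PJoin (PMeet (PVar 0) (PVar (Suc 0))) (PMeet (PJoin (PVar 0) (PVar (Suc 0))) (thr n (Suc k) (PJoin (PVar 0) (PVar (Suc 0)))))))"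
    by (rule ident; simp add: gev_thr[OF n1] assms v2_def v3_def; insert assms; auto simp: min_def max_def)
  then show ?thesis by (simp add: thr_comp v2_def)
qed

lemma chain2: assumes "a \<in> carrier A" "b \<in> carrier A" 
  shows "join A (meet A a b) (meet A (join A a b) (th k (join A a b))) = join A (join A (meet A a b) (meet A (join A a b) (th k (join A a b)))) (join A (meet A a b) (meet A (join A a b) (th (Suc k) (join A a b))))"
proof -
  have "peval A (v2 a b) (PJoin (PMeet (PVar 0) (PVar (Suc 0))) (PMeet (PJoin (PVar 0) (PVar (Suc 0))) (thr n k (PJoin (PVar 0) (PVar (Suc 0)))))) = peval A (v2 a b) (PJoin (PJoin (PMeet (PVar 0) (PVar (Suc 0))) (PMeet (PJoin (PVar 0) (PVar (Suc 0))) (thr n k (PJoin (PVar 0) (PVar (Suc 0)))))) (PJoin (PMeet (PVar 0) (PVar (Suc 0))) (PMeet (PJoin (PVar 0) (PVar (Suc 0))) (thr n (Suc k) (PJoin (PVar 0) (PVar (Suc 0)))))))"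
    by (rule ident; simp add: gev_thr[OF n1] assms v2_def v3_def; insert assms; auto simp: min_def max_def)
  then show ?thesis by (simp add: thr_comp v2_def)
qed

lemma meet_assoc: assumes "a \<in> carrier A" "b \<in> carrier A" "c \<in> carrier A"
  shows "meet A (meet A a b) c = meet A a (meet A b c)"
proof -
  have "peval A (v3 a b c) (PMeet (PMeet (PVar 0) (PVar (Suc 0))) (PVar 2)) = peval A (v3 a b c) (PMeet (PVar 0) (PMeet (PVar (Suc 0)) (PVar 2)))"
    by (rule ident; simp add: gev_thr[OF n1] assms v2_def v3_def; insert assms; auto simp: min_def max_def)
  then show ?thesis by (simp add: thr_comp v3_def)
qed

lemma join_assoc: assumes "a \<in> carrier A" "b \<in> carrier A" "c \<in> carrier A"
  shows "join A (join A a b) c = join A a (join A b c)"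
proof -
  have "peval A (v3 a b c) (PJoin (PJoin (PVar 0) (PVar (Suc 0))) (PVar 2)) = peval A (v3 a b c) (PJoin (PVar 0) (PJoin (PVar (Suc 0)) (PVar 2)))"
    by (rule ident; simp add: gev_thr[OF n1] assms v2_def v3_def; insert assms; auto simp: min_def max_def)
  then show ?thesis by (simp add: thr_comp v3_def)
qed

lemma distrib: assumes "a \<in> carrier A" "b \<in> carrier A" "c \<in> carrier A"
  shows "meet A a (join A b c) = join A (meet A a b) (meet A a c)"
proof -
  have "peval A (v3 a b c) (PMeet (PVar 0) (PJoin (PVar (Suc 0)) (PVar 2))) = peval A (v3 a b c) (PJoin (PMeet (PVar 0) (PVar (Suc 0))) (PMeet (PVar 0) (PVar 2)))"
    by (rule ident; simp add: gev_thr[OF n1] assms v2_def v3_def; insert assms; auto simp: min_def max_def)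
  then show ?thesis by (simp add: thr_comp v3_def)
qed

lemma meet_lb1: assumes "a \<in> carrier A" "b \<in> carrier A" 
  shows "meet A (meet A a b) a = meet A a b"
proof -
  have "peval A (v2 a b) (PMeet (PMeet (PVar 0) (PVar (Suc 0))) (PVar 0)) = peval A (v2 a b) (PMeet (PVar 0) (PVar (Suc 0)))"
    by (rule ident; simp add: gev_thr[OF n1] assms v2_def v3_def; insert assms; auto simp: min_def max_def)
  then show ?thesis by (simp add: thr_comp v2_def)
qed

lemma meet_lb2: assumes "a \<in> carrier A" "b \<in> carrier A" 
  shows "meet A (meet A a b) b = meet A a b"
proof -
  have "peval A (v2 a b) (PMeet (PMeet (PVar 0) (PVar (Suc 0))) (PVar (Suc 0))) = peval A (v2 a b) (PMeet (PVar 0) (PVar (Suc 0)))"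
    by (rule ident; simp add: gev_thr[OF n1] assms v2_def v3_def; insert assms; auto simp: min_def max_def)
  then show ?thesis by (simp add: thr_comp v2_def)
qed

lemma join_ub2: assumes "a \<in> carrier A" "b \<in> carrier A" 
  shows "meet A b (join A a b) = b"
proof -
  have "peval A (v2 a b) (PMeet (PVar (Suc 0)) (PJoin (PVar 0) (PVar (Suc 0)))) = peval A (v2 a b) (PVar (Suc 0))"
    by (rule ident; simp add: gev_thr[OF n1] assms v2_def v3_def; insert assms; auto simp: min_def max_def)
  then show ?thesis by (simp add: thr_comp v2_def)
qed

lemma distrib_r: assumes "a \<in> carrier A" "b \<in> carrier A" "c \<in> carrier A"
  shows "meet A (join A a b) c = join A (meet A a c) (meet A b c)"
proof -
  have "peval A (v3 a b c) (PMeet (PJoin (PVar 0) (PVar (Suc 0))) (PVar 2)) = peval A (v3 a b c) (PJoin (PMeet (PVar 0) (PVar 2)) (PMeet (PVar (Suc 0)) (PVar 2)))"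
    by (rule ident; simp add: gev_thr[OF n1] assms v2_def v3_def; insert assms; auto simp: min_def max_def)
  then show ?thesis by (simp add: thr_comp v3_def)
qed

lemma mm1: assumes "a \<in> carrier A" "b \<in> carrier A" "c \<in> carrier A"
  shows "meet A (meet A (meet A a b) c) (meet A a c) = meet A (meet A a b) c"
proof -
  have "peval A (v3 a b c) (PMeet (PMeet (PMeet (PVar 0) (PVar (Suc 0))) (PVar 2)) (PMeet (PVar 0) (PVar 2))) = peval A (v3 a b c) (PMeet (PMeet (PVar 0) (PVar (Suc 0))) (PVar 2))"
    by (rule ident; simp add: gev_thr[OF n1] assms v2_def v3_def; insert assms; auto simp: min_def max_def)
  then show ?thesis by (simp add: thr_comp v3_def)
qed

lemma mm2: assumes "a \<in> carrier A" "b \<in> carrier A" "c \<in> carrier A"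
  shows "meet A (meet A (meet A a b) c) (meet A b c) = meet A (meet A a b) c"
proof -
  have "peval A (v3 a b c) (PMeet (PMeet (PMeet (PVar 0) (PVar (Suc 0))) (PVar 2)) (PMeet (PVar (Suc 0)) (PVar 2))) = peval A (v3 a b c) (PMeet (PMeet (PVar 0) (PVar (Suc 0))) (PVar 2))"
    by (rule ident; simp add: gev_thr[OF n1] assms v2_def v3_def; insert assms; auto simp: min_def max_def)
  then show ?thesis by (simp add: thr_comp v3_def)
qed

lemma th_nmul: assumes "a \<in> carrier A" shows "peval A (\<lambda>_. a) (nmul n (PVar 0)) = th 1 a"
proof -
  have "peval A (v2 a a) (nmul n (PVar 0)) = peval A (v2 a a) (thr n 1 (PVar 0))"
    by (rule ident; simp add: gev_thr[OF n1] gev_nmul assms v2_def; insert assms; auto simp: min_def)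
  then show ?thesis by (simp add: thr_comp v2_def)
qed

lemma nmul_idem: assumes "oplus A e e = e" "1 \<le> k" shows "peval A (\<lambda>_. e) (nmul k (PVar 0)) = e"
  using assms(2)
proof (induction k)
  case (Suc k)
  then show ?case using assms(1) by (cases "k = 0") auto
qed simp

end

context pmvn
begin

abbreviation Lc where "Lc \<equiv> lcarrier (skeleton A)"

lemma Lc_iff: "a \<in> Lc \<longleftrightarrow> a \<in> carrier A \<and> oplus A a a = a"
  by (simp add: skeleton_def)

lemma Lc_meet: "a \<in> Lc \<Longrightarrow> b \<in> Lc \<Longrightarrow> meet A a b \<in> Lc"
  by (simp add: Lc_iff skel_meet cl)
lemma Lc_join: "a \<in> Lc \<Longrightarrow> b \<in> Lc \<Longrightarrow> join A a b \<in> Lc"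
  by (simp add: Lc_iff skel_join cl)
lemma Lc_zero: "zero A \<in> Lc" by (simp add: Lc_iff skel_zero[OF cl(1) cl(1)] cl)
lemma Lc_one: "one A \<in> Lc" by (simp add: Lc_iff skel_one[OF cl(1) cl(1)] cl)
lemma Lc_th: "a \<in> carrier A \<Longrightarrow> th m a \<in> Lc" by (simp add: Lc_iff th_closed th_idem)

abbreviation le where "le a b \<equiv> meet A a b = a"

lemma le_trans:
  assumes "a \<in> carrier A" "b \<in> carrier A" "c \<in> carrier A" "le a b" "le b c"
  shows "le a c"
proof -
  have "meet A a c = meet A (meet A a b) c" using assms(4) by simp
  also have "\<dots> = meet A a (meet A b c)" by (rule meet_assoc[OF assms(1-3)])
  also have "\<dots> = meet A a b" using assms(5) by simp
  also have "\<dots> = a" using assms(4) by simp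
  finally show ?thesis .
qed

lemma meet_glb:
  assumes "a \<in> carrier A" "b \<in> carrier A" "c \<in> carrier A" "le c a" "le c b"
  shows "le c (meet A a b)"
proof -
  have "meet A c (meet A a b) = meet A (meet A c a) b" by (rule meet_assoc[OF assms(3,1,2), symmetric])
  also have "\<dots> = meet A c b" using assms(4) by simp
  also have "\<dots> = c" using assms(5) by simp
  finally show ?thesis .
qed

lemma join_lub:
  assumes "a \<in> carrier A" "b \<in> carrier A" "c \<in> carrier A" "le a c" "le b c"
  shows "le (join A a b) c"
  using assms by (simp add: distrib_r)

definition filt :: "'a set \<Rightarrow> bool" where
  "filt F \<longleftrightarrow> F \<subseteq> Lc \<and> (\<forall>a\<in>F. \<forall>b\<in>F. meet A a b \<in> F) \<and> (\<forall>a\<in>F. \<forall>b\<in>Lc. le a b \<longrightarrow> b \<in> F)"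

lemma Lc_car: "a \<in> Lc \<Longrightarrow> a \<in> carrier A" by (simp add: Lc_iff)

lemma prime_filter:
  assumes u: "u \<in> Lc" and v: "v \<in> Lc" and nle: "meet A u v \<noteq> u"
  shows "\<exists>x\<in>dual_space (skeleton A). x u \<and> \<not> x v"
proof -
  define FF where "FF = {F. filt F \<and> u \<in> F \<and> v \<notin> F}"
  define F0 where "F0 = {b \<in> Lc. le u b}"
  have uc: "u \<in> carrier A" and vc: "v \<in> carrier A" using u v by (simp_all add: Lc_iff)
  have "F0 \<in> FF"
    unfolding FF_def filt_def
  proof (intro CollectI conjI ballI impI)
    show "F0 \<subseteq> Lc" unfolding F0_def by auto
    show "u \<in> F0" unfolding F0_def using u uc by (simp add: meet_idem)
    show "v \<notin> F0" unfolding F0_def using nle by simp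
    fix a b assume a: "a \<in> F0" and b: "b \<in> F0"
    then show "meet A a b \<in> F0" unfolding F0_def using uc
      by (auto simp: Lc_meet Lc_car meet_glb)
  next
    fix a b assume a: "a \<in> F0" and b: "b \<in> Lc" and ab: "le a b"
    then show "b \<in> F0" unfolding F0_def using uc le_trans[of u a b] by (auto simp: Lc_car)
  qed
  then have FFne: "FF \<noteq> {}" by auto
  have ch: "\<Union>C \<in> FF" if "C \<noteq> {}" "subset.chain FF C" for C
  proof -
    have CF: "C \<subseteq> FF" and tot: "\<forall>X\<in>C. \<forall>Y\<in>C. X \<subseteq> Y \<or> Y \<subseteq> X"
      using that(2) by (auto simp: subset_chain_def)
    show ?thesis unfolding FF_def filt_def
    proof (intro CollectI conjI ballI impI)
      show "\<Union>C \<subseteq> Lc" using CF by (auto simp: FF_def filt_def)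
      show "u \<in> \<Union>C" using CF that(1) by (auto simp: FF_def)
      show "v \<notin> \<Union>C" using CF by (auto simp: FF_def)
      fix a b assume a: "a \<in> \<Union>C" and b: "b \<in> \<Union>C"
      then obtain X Y where X: "X \<in> C" "a \<in> X" and Y: "Y \<in> C" "b \<in> Y" by auto
      from tot X Y have "X \<subseteq> Y \<or> Y \<subseteq> X" by auto
      then show "meet A a b \<in> \<Union>C"
      proof
        assume "X \<subseteq> Y"
        have "filt Y" using CF Y by (auto simp: FF_def)
        then have "meet A a b \<in> Y" using X Y \<open>X \<subseteq> Y\<close> by (auto simp: filt_def)
        then show ?thesis using Y by auto
      next
        assume "Y \<subseteq> X"
        have "filt X" using CF X by (auto simp: FF_def)
        then have "meet A a b \<in> X" using X Y \<open>Y \<subseteq> X\<close> by (auto simp: filt_def)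
        then show ?thesis using X by auto
      qed
    next
      fix a b assume a: "a \<in> \<Union>C" and b: "b \<in> Lc" and ab: "le a b"
      then obtain X where X: "X \<in> C" "a \<in> X" by auto
      have "filt X" using CF X by (auto simp: FF_def)
      then have "b \<in> X" using b ab X by (auto simp: filt_def)
      then show "b \<in> \<Union>C" using X by auto
    qed
  qed
  obtain M where MF: "M \<in> FF" and Mmax: "\<forall>X\<in>FF. M \<subseteq> X \<longrightarrow> X = M"
    using subset_Zorn_nonempty[OF FFne ch] by blast
  have Mfilt: "filt M" and uM: "u \<in> M" and vM: "v \<notin> M" using MF by (auto simp: FF_def)
  have MLc: "M \<subseteq> Lc" and Mmeet: "\<And>a b. a \<in> M \<Longrightarrow> b \<in> M \<Longrightarrow> meet A a b \<in> M"
    and Mup: "\<And>a b. a \<in> M \<Longrightarrow> b \<in> Lc \<Longrightarrow> le a b \<Longrightarrow> b \<in> M"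
    using Mfilt by (auto simp: filt_def)
  have ext: "\<exists>f\<in>M. le (meet A f a) v" if a: "a \<in> Lc" "a \<notin> M" for a
  proof (rule ccontr)
    assume nex: "\<not> (\<exists>f\<in>M. le (meet A f a) v)"
    define Ma where "Ma = {c \<in> Lc. \<exists>f\<in>M. le (meet A f a) c}"
    have ac: "a \<in> carrier A" using a by (simp add: Lc_iff)
    have "Ma \<in> FF"
      unfolding FF_def filt_def
    proof (intro CollectI conjI ballI impI)
      show "Ma \<subseteq> Lc" unfolding Ma_def by auto
      show "u \<in> Ma" unfolding Ma_def using u uM uc ac by (auto simp: meet_lb1 intro!: bexI[of _ u])
      show "v \<notin> Ma" unfolding Ma_def using nex by auto
      fix c d assume c: "c \<in> Ma" and d: "d \<in> Ma"
      then obtain f1 f2 where f1: "f1 \<in> M" "le (meet A f1 a) c" and f2: "f2 \<in> M" "le (meet A f2 a) d"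
        and cL: "c \<in> Lc" and dL: "d \<in> Lc" unfolding Ma_def by auto
      have f1c: "f1 \<in> carrier A" and f2c: "f2 \<in> carrier A" using f1 f2 MLc by (auto simp: Lc_iff)
      have cc: "c \<in> carrier A" and dc: "d \<in> carrier A" using cL dL by (auto simp: Lc_iff)
      have g: "meet A f1 f2 \<in> M" using Mmeet f1 f2 by auto
      have "le (meet A (meet A f1 f2) a) (meet A f1 a)" using f1c f2c ac by (rule mm1)
      then have 1: "le (meet A (meet A f1 f2) a) c"
        using le_trans[of "meet A (meet A f1 f2) a" "meet A f1 a" c] f1 f1c f2c ac cc by (simp add: cl)
      have "le (meet A (meet A f1 f2) a) (meet A f2 a)" using f1c f2c ac by (rule mm2)
      then have 2: "le (meet A (meet A f1 f2) a) d"
        using le_trans[of "meet A (meet A f1 f2) a" "meet A f2 a" d] f2 f1c f2c ac dc by (simp add: cl)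
      have "le (meet A (meet A f1 f2) a) (meet A c d)"
        using meet_glb[OF cc dc _ 1 2] f1c f2c ac by (simp add: cl)
      then show "meet A c d \<in> Ma" unfolding Ma_def using g cL dL Lc_meet by blast
    next
      fix c d assume c: "c \<in> Ma" and d: "d \<in> Lc" and cd: "le c d"
      then obtain f where f: "f \<in> M" "le (meet A f a) c" and cL: "c \<in> Lc" unfolding Ma_def by auto
      have fc: "f \<in> carrier A" using f MLc by (auto simp: Lc_iff)
      have "le (meet A f a) d" using le_trans[of "meet A f a" c d] f cd fc ac cL d by (simp add: cl Lc_car)
      then show "d \<in> Ma" unfolding Ma_def using f d by blast
    qed
    moreover have "M \<subseteq> Ma"
    proof
      fix c assume c: "c \<in> M"
      then have cc: "c \<in> carrier A" using MLc by (auto simp: Lc_iff)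
      have "le (meet A c a) c" using meet_lb1[OF cc ac] .
      then show "c \<in> Ma" unfolding Ma_def using c MLc by blast
    qed
    ultimately have "Ma = M" using Mmax by blast
    moreover have "a \<in> Ma" unfolding Ma_def using a uM uc ac by (auto simp: meet_lb2 intro!: bexI[of _ u])
    ultimately show False using a by simp
  qed
  have prime: "a \<in> M \<or> b \<in> M" if a: "a \<in> Lc" and b: "b \<in> Lc" and ab: "join A a b \<in> M" for a b
  proof (rule ccontr)
    assume "\<not> (a \<in> M \<or> b \<in> M)"
    then obtain f1 f2 where f1: "f1 \<in> M" "le (meet A f1 a) v" and f2: "f2 \<in> M" "le (meet A f2 b) v"
      using ext a b by blast
    have ac: "a \<in> carrier A" and bc: "b \<in> carrier A" using a b by (auto simp: Lc_iff)
    have f1c: "f1 \<in> carrier A" and f2c: "f2 \<in> carrier A" using f1 f2 MLc by (auto simp: Lc_iff)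
    define f where "f = meet A f1 f2"
    have fM: "f \<in> M" unfolding f_def using Mmeet f1 f2 by auto
    have fc: "f \<in> carrier A" unfolding f_def using f1c f2c by (simp add: cl)
    have 1: "le (meet A f a) v"
      using le_trans[of "meet A f a" "meet A f1 a" v] mm1[OF f1c f2c ac] f1 f1c f2c ac vc
      unfolding f_def by (simp add: cl)
    have 2: "le (meet A f b) v"
      using le_trans[of "meet A f b" "meet A f2 b" v] mm2[OF f1c f2c bc] f2 f1c f2c bc vc
      unfolding f_def by (simp add: cl)
    have gM: "meet A f (join A a b) \<in> M" using Mmeet[OF fM ab] .
    have "meet A f (join A a b) = join A (meet A f a) (meet A f b)" using fc ac bc by (rule distrib)
    moreover have "le (join A (meet A f a) (meet A f b)) v"
      using join_lub[OF _ _ vc 1 2] fc ac bc by (simp add: cl)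
    ultimately have "le (meet A f (join A a b)) v" by simp
    then have "v \<in> M" using Mup[OF gM v] by simp
    then show False using vM by simp
  qed
  define x where "x = (\<lambda>c\<in>Lc. c \<in> M)"
  have "x \<in> dual_space (skeleton A)"
    unfolding dual_space_def
  proof (intro CollectI conjI ballI)
    show "x \<in> extensional Lc" unfolding x_def by simp
    have "zero A \<notin> M"
    proof
      assume "zero A \<in> M"
      then have "v \<in> M" using Mup[OF _ v] meet_zero[OF vc vc] by simp
      then show False using vM by simp
    qed
    then show "x (lbot (skeleton A)) = False" unfolding x_def by (simp add: skeleton_def cl skel_zero[OF cl(1) cl(1)])
    have "one A \<in> M" using Mup[OF uM Lc_one] meet_one[OF uc uc] by simp
    then show "x (ltop (skeleton A)) = True" unfolding x_def by (simp add: skeleton_def cl skel_one[OF cl(1) cl(1)])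
    fix a b assume a: "a \<in> Lc" and b: "b \<in> Lc"
    have ac: "a \<in> carrier A" and bc: "b \<in> carrier A" using a b by (auto simp: Lc_iff)
    have "meet A a b \<in> M \<longleftrightarrow> a \<in> M \<and> b \<in> M"
      using Mmeet Mup[of "meet A a b" a] Mup[of "meet A a b" b] a b meet_lb1[OF ac bc] meet_lb2[OF ac bc]
      by (auto)
    then show "x (lmeet (skeleton A) a b) = (x a \<and> x b)" unfolding x_def
      using a b Lc_meet by (simp add: skeleton_def)
    have "join A a b \<in> M \<longleftrightarrow> a \<in> M \<or> b \<in> M"
      using prime[OF a b] Mup[of a "join A a b"] Mup[of b "join A a b"] Lc_join[OF a b]
        absorb_mj[OF ac bc] join_ub2[OF ac bc]
      by auto
    then show "x (ljoin (skeleton A) a b) = (x a \<or> x b)" unfolding x_def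
      using a b Lc_join by (simp add: skeleton_def)
  qed
  moreover have "x u" "\<not> x v" unfolding x_def using u v uM vM by auto
  ultimately show ?thesis by blast
qed

end

lemma top_dual: "topspace (dual_topology L) = dual_space L"
  unfolding dual_topology_def by (auto simp: dual_space_def PiE_def Pi_def)

lemma cont_fin:
  assumes C: "finite C" "C \<subseteq> lcarrier L"
    and fS: "\<forall>x\<in>dual_space L. f x \<in> S"
    and dep: "\<forall>x\<in>dual_space L. \<forall>y\<in>dual_space L. (\<forall>c\<in>C. x c = y c) \<longrightarrow> f x = f y"
  shows "continuous_map (dual_topology L) (discrete_topology S) f"
  unfolding continuous_map_def
proof (intro conjI allI impI)
  show "f \<in> topspace (dual_topology L) \<rightarrow> topspace (discrete_topology S)"
    using fS by (auto simp: top_dual)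
  let ?P = "product_topology (\<lambda>_. discrete_topology (UNIV::bool set)) (lcarrier L)"
  fix U assume "openin (discrete_topology S) U"
  show "openin (dual_topology L) {x \<in> topspace (dual_topology L). f x \<in> U}"
  proof (subst openin_subopen, intro ballI)
    fix x0 assume x0: "x0 \<in> {x \<in> topspace (dual_topology L). f x \<in> U}"
    then have x0X: "x0 \<in> dual_space L" and fx0: "f x0 \<in> U" by (auto simp: top_dual)
    define V where "V = (\<Inter>c\<in>C. {x \<in> topspace ?P. x c \<in> {x0 c}}) \<inter> topspace ?P"
    have "openin ?P V" unfolding V_def
    proof (rule openin_INT[OF C(1)])
      fix c assume "c \<in> C"
      then have "c \<in> lcarrier L" using C(2) by auto
      then show "openin ?P {x \<in> topspace ?P. x c \<in> {x0 c}}"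
        using openin_continuous_map_preimage[OF continuous_map_product_projection[of c "lcarrier L" "\<lambda>_. discrete_topology (UNIV::bool set)"], of "{x0 c}"]
        by simp
    qed
    then have op: "openin (dual_topology L) (V \<inter> dual_space L)"
      unfolding dual_topology_def openin_subtopology by blast
    have x0P: "x0 \<in> topspace ?P" using x0X by (auto simp: dual_space_def PiE_def Pi_def)
    show "\<exists>T. openin (dual_topology L) T \<and> x0 \<in> T \<and> T \<subseteq> {x \<in> topspace (dual_topology L). f x \<in> U}"
    proof (intro exI conjI)
      show "openin (dual_topology L) (V \<inter> dual_space L)" by (rule op)
      show "x0 \<in> V \<inter> dual_space L" unfolding V_def using x0P x0X by blast
      show "V \<inter> dual_space L \<subseteq> {x \<in> topspace (dual_topology L). f x \<in> U}"
      proof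
        fix x assume x: "x \<in> V \<inter> dual_space L"
        then have xc: "\<forall>c\<in>C. x c = x0 c" unfolding V_def by blast
        have xX: "x \<in> dual_space L" using x by blast
        have "f x = f x0" using dep xX x0X xc by blast
        then show "x \<in> {x \<in> topspace (dual_topology L). f x \<in> U}" using x fx0 by (auto simp: top_dual)
      qed
    qed
  qed
qed

lemma hom_peval:
  assumes "pmv_structure A" "pmv_hom A B h" "\<And>i. v i \<in> carrier A"
  shows "h (peval A v s) = peval B (\<lambda>i. h (v i)) s"
  using assms by (induction s) (auto simp: pmv_hom_def peval_closed)

lemma pp_peval:
  assumes "x \<in> dual_space L"
  shows "peval (priestley_power n L) w s x = peval (PL n) (\<lambda>i. w i x) s"
  using assms by (induction s) (auto simp: priestley_power_def Let_def)

context pmvn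
begin

lemma join_idem: assumes "a \<in> carrier A" shows "join A a a = a"
proof -
  have "peval A (v2 a a) (PJoin (PVar 0) (PVar 0)) = peval A (v2 a a) (PVar 0)"
    by (rule ident; simp add: assms v2_def; auto simp: max_def)
  then show ?thesis by (simp add: v2_def)
qed

abbreviation X where "X \<equiv> dual_space (skeleton A)"

lemma pt_meet: "x \<in> X \<Longrightarrow> u \<in> Lc \<Longrightarrow> w \<in> Lc \<Longrightarrow> x (meet A u w) = (x u \<and> x w)"
  by (simp add: dual_space_def skeleton_def)
lemma pt_join: "x \<in> X \<Longrightarrow> u \<in> Lc \<Longrightarrow> w \<in> Lc \<Longrightarrow> x (join A u w) = (x u \<or> x w)"
  by (simp add: dual_space_def skeleton_def)
lemma pt_zero: "x \<in> X \<Longrightarrow> \<not> x (zero A)"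
  by (simp add: dual_space_def skeleton_def)
lemma pt_one: "x \<in> X \<Longrightarrow> x (one A)"
  by (simp add: dual_space_def skeleton_def)

definition lev where "lev x a = Max ({0} \<union> {m \<in> {1..n}. x (th m a)})"

lemma lev_fin: "finite ({0} \<union> {m \<in> {1..n}. x (th m a)})" by simp

lemma lev_le: "lev x a \<le> n"
  unfolding lev_def using lev_fin by (auto intro!: Max.boundedI)

lemma lev_char:
  assumes x: "x \<in> X" and a: "a \<in> carrier A"
  shows "x (th m a) \<longleftrightarrow> m \<le> lev x a"
proof -
  consider "m = 0" | "n < m" | "1 \<le> m \<and> m \<le> n" by linarith
  then show ?thesis
  proof cases
    case 1 then show ?thesis using pt_one[OF x] by (simp add: th0)
  next
    case 2 then show ?thesis using pt_zero[OF x] lev_le[of x a] by (simp add: th_big)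
  next
    case 3
    show ?thesis
    proof
      assume "x (th m a)"
      then have "m \<in> {0} \<union> {m \<in> {1..n}. x (th m a)}" using 3 by auto
      then show "m \<le> lev x a" unfolding lev_def using lev_fin by (rule Max_ge[rotated])
    next
      assume ml: "m \<le> lev x a"
      have "lev x a \<in> {0} \<union> {m \<in> {1..n}. x (th m a)}" unfolding lev_def
        using lev_fin by (rule Max_in) simp
      moreover have "lev x a \<noteq> 0" using ml 3 by simp
      ultimately have l: "x (th (lev x a) a)" by auto
      have e: "meet A (th (lev x a) a) (th m a) = th (lev x a) a" using th_mono[OF a ml] .
      have "x (meet A (th (lev x a) a) (th m a)) = (x (th (lev x a) a) \<and> x (th m a))"
        by (rule pt_meet[OF x Lc_th[OF a] Lc_th[OF a]])
      then show "x (th m a)" using l e by simp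
    qed
  qed
qed

lemma lev_unique:
  assumes x: "x \<in> X" and a: "a \<in> carrier A" and h: "\<forall>m. x (th m a) \<longleftrightarrow> m \<le> l"
  shows "lev x a = l"
proof -
  have "\<forall>m. m \<le> lev x a \<longleftrightarrow> m \<le> l" using h lev_char[OF x a] by simp
  then show ?thesis by (meson le_antisym order_refl)
qed

lemma lev_meet:
  assumes x: "x \<in> X" and a: "a \<in> carrier A" and b: "b \<in> carrier A"
  shows "lev x (meet A a b) = min (lev x a) (lev x b)"
proof (rule lev_unique[OF x cl(3)[OF a b]], intro allI)
  fix m
  have "x (th m (meet A a b)) = (x (th m a) \<and> x (th m b))"
    using th_meet[OF a b] pt_meet[OF x Lc_th[OF a] Lc_th[OF b]] by simp
  then show "x (th m (meet A a b)) \<longleftrightarrow> m \<le> min (lev x a) (lev x b)"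
    using lev_char[OF x a] lev_char[OF x b] by simp
qed

lemma lev_join:
  assumes x: "x \<in> X" and a: "a \<in> carrier A" and b: "b \<in> carrier A"
  shows "lev x (join A a b) = max (lev x a) (lev x b)"
proof (rule lev_unique[OF x cl(4)[OF a b]], intro allI)
  fix m
  have "x (th m (join A a b)) = (x (th m a) \<or> x (th m b))"
    using th_join[OF a b] pt_join[OF x Lc_th[OF a] Lc_th[OF b]] by simp
  then show "x (th m (join A a b)) \<longleftrightarrow> m \<le> max (lev x a) (lev x b)"
    using lev_char[OF x a] lev_char[OF x b] by auto
qed

lemma lev_oplus:
  assumes x: "x \<in> X" and a: "a \<in> carrier A" and b: "b \<in> carrier A"
  shows "lev x (oplus A a b) = min n (lev x a + lev x b)"
proof (rule lev_unique[OF x cl(5)[OF a b]], intro allI iffI)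
  fix m
  let ?la = "lev x a" and ?lb = "lev x b"
  have ab: "oplus A a b \<in> carrier A" using cl(5)[OF a b] .
  assume h: "x (th m (oplus A a b))"
  have mn: "m \<le> n"
  proof (rule ccontr)
    assume "\<not> m \<le> n"
    then have "th m (oplus A a b) = zero A" by (simp add: th_big)
    then show False using h pt_zero[OF x] by simp
  qed
  have "m \<le> ?la + ?lb"
  proof (rule ccontr)
    assume "\<not> m \<le> ?la + ?lb"
    then have lt: "?la + ?lb < m" by simp
    have e: "meet A (th m (oplus A a b)) (join A (th (?la+1) a) (th (?lb+1) b)) = th m (oplus A a b)"
      using th_E2[OF a b lt] .
    have "x (meet A (th m (oplus A a b)) (join A (th (?la+1) a) (th (?lb+1) b)))
       = (x (th m (oplus A a b)) \<and> (x (th (?la+1) a) \<or> x (th (?lb+1) b)))"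
      using pt_meet[OF x Lc_th[OF ab] Lc_join[OF Lc_th[OF a] Lc_th[OF b]]]
        pt_join[OF x Lc_th[OF a] Lc_th[OF b]] by simp
    then have "x (th (?la+1) a) \<or> x (th (?lb+1) b)" using e h by simp
    then show False using lev_char[OF x a, of "?la+1"] lev_char[OF x b, of "?lb+1"] by simp
  qed
  then show "m \<le> min n (?la + ?lb)" using mn by simp
next
  fix m
  let ?la = "lev x a" and ?lb = "lev x b"
  have ab: "oplus A a b \<in> carrier A" using cl(5)[OF a b] .
  assume h: "m \<le> min n (?la + ?lb)"
  define i where "i = min m ?la"
  define j where "j = m - i"
  have ij: "i + j = m" "i \<le> ?la" "j \<le> ?lb" using h unfolding i_def j_def by auto
  have xi: "x (th i a)" and xj: "x (th j b)" using lev_char[OF x a] lev_char[OF x b] ij by auto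
  have e: "meet A (meet A (th i a) (th j b)) (th (i+j) (oplus A a b)) = meet A (th i a) (th j b)"
    using th_E1[OF a b, of i j] ij(1) h by simp
  have "x (meet A (meet A (th i a) (th j b)) (th (i+j) (oplus A a b)))
     = ((x (th i a) \<and> x (th j b)) \<and> x (th (i+j) (oplus A a b)))"
    using pt_meet[OF x Lc_meet[OF Lc_th[OF a] Lc_th[OF b]] Lc_th[OF ab]]
      pt_meet[OF x Lc_th[OF a] Lc_th[OF b]] by simp
  then have "x (th (i+j) (oplus A a b))" using e xi xj pt_meet[OF x Lc_th[OF a] Lc_th[OF b]] by simp
  then show "x (th m (oplus A a b))" using ij by simp
qed

lemma lev_odot:
  assumes x: "x \<in> X" and a: "a \<in> carrier A" and b: "b \<in> carrier A"
  shows "lev x (odot A a b) = lev x a + lev x b - n"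
proof (rule lev_unique[OF x cl(6)[OF a b]], intro allI iffI)
  fix m
  let ?la = "lev x a" and ?lb = "lev x b"
  have ab: "odot A a b \<in> carrier A" using cl(6)[OF a b] .
  assume h: "x (th m (odot A a b))"
  show "m \<le> ?la + ?lb - n"
  proof (rule ccontr)
    assume nle: "\<not> m \<le> ?la + ?lb - n"
    then have m1: "1 \<le> m" by simp
    have lt: "?la + ?lb < m + n" using nle by simp
    have e: "meet A (th m (odot A a b)) (join A (th (?la+1) a) (th (?lb+1) b)) = th m (odot A a b)"
      using th_F2[OF a b lt m1] .
    have "x (meet A (th m (odot A a b)) (join A (th (?la+1) a) (th (?lb+1) b)))
       = (x (th m (odot A a b)) \<and> (x (th (?la+1) a) \<or> x (th (?lb+1) b)))"
      using pt_meet[OF x Lc_th[OF ab] Lc_join[OF Lc_th[OF a] Lc_th[OF b]]]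
        pt_join[OF x Lc_th[OF a] Lc_th[OF b]] by simp
    then have "x (th (?la+1) a) \<or> x (th (?lb+1) b)" using e h by simp
    then show False using lev_char[OF x a, of "?la+1"] lev_char[OF x b, of "?lb+1"] by simp
  qed
next
  fix m
  let ?la = "lev x a" and ?lb = "lev x b"
  have ab: "odot A a b \<in> carrier A" using cl(6)[OF a b] .
  assume h: "m \<le> ?la + ?lb - n"
  show "x (th m (odot A a b))"
  proof (cases "m = 0")
    case True then show ?thesis using pt_one[OF x] by (simp add: th0)
  next
    case False
    then have le: "m + n \<le> ?la + ?lb" using h by simp
    have xi: "x (th ?la a)" and xj: "x (th ?lb b)" using lev_char[OF x a] lev_char[OF x b] by auto
    have e: "meet A (meet A (th ?la a) (th ?lb b)) (th m (odot A a b)) = meet A (th ?la a) (th ?lb b)"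
      using th_F1[OF a b le] .
    have "x (meet A (meet A (th ?la a) (th ?lb b)) (th m (odot A a b)))
       = ((x (th ?la a) \<and> x (th ?lb b)) \<and> x (th m (odot A a b)))"
      using pt_meet[OF x Lc_meet[OF Lc_th[OF a] Lc_th[OF b]] Lc_th[OF ab]]
        pt_meet[OF x Lc_th[OF a] Lc_th[OF b]] by simp
    then show ?thesis using e xi xj pt_meet[OF x Lc_th[OF a] Lc_th[OF b]] by simp
  qed
qed

lemma lev_zero: assumes x: "x \<in> X" shows "lev x (zero A) = 0"
proof (rule lev_unique[OF x cl(1)], intro allI)
  fix m show "x (th m (zero A)) \<longleftrightarrow> m \<le> 0"
    using pt_one[OF x] pt_zero[OF x] th_zero[OF cl(1) cl(1), of m] by (cases "m = 0") (auto simp: th0)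
qed

lemma lev_one: assumes x: "x \<in> X" shows "lev x (one A) = n"
proof (rule lev_unique[OF x cl(2)], intro allI)
  fix m show "x (th m (one A)) \<longleftrightarrow> m \<le> n"
    using pt_one[OF x] pt_zero[OF x] th_one[OF cl(2) cl(2), of m] th_big[of m "one A"] by (cases "m \<le> n") auto
qed

end

context pmvn
begin

abbreviation PP where "PP \<equiv> priestley_power n (skeleton A)"

definition eta where "eta a = (\<lambda>x\<in>X. real (lev x a) / real n)"

lemma eta_carrier:
  assumes a: "a \<in> carrier A"
  shows "eta a \<in> carrier PP"
proof -
  have ext: "eta a \<in> extensional X" unfolding eta_def by simp
  have cont: "continuous_map (dual_topology (skeleton A)) (discrete_topology (carrier (PL n))) (eta a)"
  proof (rule cont_fin[where C = "(\<lambda>m. th m a) ` {1..n}"])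
    show "finite ((\<lambda>m. th m a) ` {1..n})" by simp
    show "(\<lambda>m. th m a) ` {1..n} \<subseteq> Lc" using Lc_th[OF a] by auto
    show "\<forall>x\<in>X. eta a x \<in> carrier (PL n)"
      using lev_le by (auto simp: eta_def PL_def)
    show "\<forall>x\<in>X. \<forall>y\<in>X. (\<forall>c\<in>(\<lambda>m. th m a) ` {1..n}. x c = y c) \<longrightarrow> eta a x = eta a y"
    proof (intro ballI impI)
      fix x y assume x: "x \<in> X" and y: "y \<in> X" and h: "\<forall>c\<in>(\<lambda>m. th m a) ` {1..n}. x c = y c"
      have "{m \<in> {1..n}. x (th m a)} = {m \<in> {1..n}. y (th m a)}" using h by auto
      then have "lev x a = lev y a" unfolding lev_def by simp
      then show "eta a x = eta a y" using x y by (simp add: eta_def)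
    qed
  qed
  have mono: "\<forall>x\<in>X. \<forall>y\<in>X. dual_le (skeleton A) x y \<longrightarrow> eta a x \<le> eta a y"
  proof (intro ballI impI)
    fix x y assume x: "x \<in> X" and y: "y \<in> X" and le: "dual_le (skeleton A) x y"
    have "{0} \<union> {m \<in> {1..n}. x (th m a)} \<subseteq> {0} \<union> {m \<in> {1..n}. y (th m a)}"
      using le Lc_th[OF a] by (auto simp: dual_le_def)
    then have "lev x a \<le> lev y a" unfolding lev_def by (rule Max_mono) auto
    then show "eta a x \<le> eta a y" using x y by (simp add: eta_def divide_right_mono)
  qed
  show ?thesis using ext cont mono by (simp add: priestley_power_def Let_def)
qed

lemma eta_hom: "pmv_hom A PP eta"
  unfolding pmv_hom_def
proof (intro conjI ballI)
  have np: "real n > 0" using n1 by simp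
  show "eta a \<in> carrier PP" if "a \<in> carrier A" for a using eta_carrier that .
  show "eta (zero A) = zero PP"
    unfolding eta_def by (simp add: priestley_power_def Let_def PL_def lev_zero cong: restrict_cong)
  show "eta (one A) = one PP"
    unfolding eta_def using np by (simp add: priestley_power_def Let_def PL_def lev_one cong: restrict_cong)
  fix a b assume a: "a \<in> carrier A" and b: "b \<in> carrier A"
  show "eta (meet A a b) = meet PP (eta a) (eta b)"
    unfolding eta_def using grid_min[OF n1]
    by (simp add: priestley_power_def Let_def PL_def lev_meet a b cong: restrict_cong)
  show "eta (join A a b) = join PP (eta a) (eta b)"
    unfolding eta_def using grid_min[OF n1]
    by (simp add: priestley_power_def Let_def PL_def lev_join a b cong: restrict_cong)
  show "eta (oplus A a b) = oplus PP (eta a) (eta b)"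
    unfolding eta_def using grid_oplus[OF n1]
    by (simp add: priestley_power_def Let_def PL_def lev_oplus a b cong: restrict_cong)
  show "eta (odot A a b) = odot PP (eta a) (eta b)"
    unfolding eta_def using grid_odot[OF n1]
    by (simp add: priestley_power_def Let_def PL_def lev_odot a b cong: restrict_cong)
qed

lemma th_idem_el:
  assumes e: "e \<in> Lc" and m: "1 \<le> m" "m \<le> n"
  shows "th m e = e"
proof -
  have ec: "e \<in> carrier A" and ee: "oplus A e e = e" using e by (auto simp: Lc_iff)
  have 1: "th 1 e = e" using th_nmul[OF ec] nmul_idem[OF ee n1] by simp
  have "th m (th 1 e) = th 1 e" by (rule th_th1[OF ec ec m])
  then show ?thesis using 1 by simp
qed

lemma eta_idem:
  assumes e: "e \<in> Lc"
  shows "eta e = idem_point A e"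
proof -
  have ec: "e \<in> carrier A" using e by (auto simp: Lc_iff)
  have np: "real n > 0" using n1 by simp
  have lv: "lev x e = (if x e then n else 0)" if x: "x \<in> X" for x
  proof (rule lev_unique[OF x ec], intro allI)
    fix m
    consider "m = 0" | "n < m" | "1 \<le> m \<and> m \<le> n" by linarith
    then show "x (th m e) \<longleftrightarrow> m \<le> (if x e then n else 0)"
    proof cases
      case 1 then show ?thesis using pt_one[OF x] by (simp add: th0)
    next
      case 2 then show ?thesis using pt_zero[OF x] by (simp add: th_big)
    next
      case 3 then show ?thesis using th_idem_el[OF e] by auto
    qed
  qed
  show ?thesis unfolding eta_def idem_point_def
    using lv np by (auto intro!: restrict_ext)
qed

lemma th_sep:
  assumes a: "a \<in> carrier A" and b: "b \<in> carrier A" and h: "\<forall>m. th m a = th m b"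
  shows "a = b"
proof -
  define p where "p = meet A a b"
  define q where "q = join A a b"
  have pc: "p \<in> carrier A" and qc: "q \<in> carrier A" unfolding p_def q_def using a b by (simp_all add: cl)
  have tp: "th k p = th k a" for k
    unfolding p_def using th_meet[OF a b] h meet_idem[OF th_closed[OF a] th_closed[OF a]] by simp
  have tq: "th k q = th k a" for k
    unfolding q_def using th_join[OF a b] h join_idem[OF th_closed[OF a]] by simp
  define r where "r k = join A p (meet A q (th k q))" for k
  have step: "r (Suc k) = r k" for k
  proof -
    have 1: "r (Suc k) = join A (r k) (r (Suc k))"
      using chain1[OF a b, of k] tp tq unfolding r_def p_def[symmetric] q_def[symmetric] by simp
    have 2: "r k = join A (r k) (r (Suc k))"
      using chain2[OF a b, of k] unfolding r_def p_def[symmetric] q_def[symmetric] by simp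
    show ?thesis using 1 2 by simp
  qed
  have all: "r k = r 0" for k by (induction k) (simp_all add: step)
  have r0: "r 0 = q" using chain0[OF a b] unfolding r_def p_def[symmetric] q_def[symmetric] by (simp add: th0)
  have rn: "r (Suc n) = p" using chainN[OF a b] unfolding r_def p_def[symmetric] q_def[symmetric] by (simp add: th_big)
  have pq: "p = q" using all[of "Suc n"] r0 rn by simp
  have "a = q" using absorb_jm[OF a b] absorb_jj[OF a b] pq unfolding p_def q_def by simp
  moreover have "b = q" using absorb_jm2[OF a b] absorb_jj2[OF a b] pq unfolding p_def q_def by simp
  ultimately show ?thesis by simp
qed

lemma eta_inj: "inj_on eta (carrier A)"
proof (rule inj_onI, rule ccontr)
  fix a b assume a: "a \<in> carrier A" and b: "b \<in> carrier A" and e: "eta a = eta b" and ne: "a \<noteq> b"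
  obtain m where m: "th m a \<noteq> th m b" using th_sep[OF a b] ne by blast
  have u: "th m a \<in> Lc" and v: "th m b \<in> Lc" using Lc_th a b by auto
  have uc: "th m a \<in> carrier A" and vc: "th m b \<in> carrier A" using th_closed a b by auto
  have np: "real n > 0" using n1 by simp
  have "\<exists>x\<in>X. x (th m a) \<noteq> x (th m b)"
  proof (cases "meet A (th m a) (th m b) = th m a")
    case True
    have "meet A (th m b) (th m a) \<noteq> th m b"
      using True m meet_comm[OF uc vc] by simp
    then obtain x where "x \<in> X" "x (th m b)" "\<not> x (th m a)" using prime_filter[OF v u] by blast
    then show ?thesis by auto
  next
    case False
    then obtain x where "x \<in> X" "x (th m a)" "\<not> x (th m b)" using prime_filter[OF u v] by blast
    then show ?thesis by auto
  qed
  then obtain x where x: "x \<in> X" and xd: "x (th m a) \<noteq> x (th m b)" by blast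
  have "lev x a \<noteq> lev x b" using xd lev_char[OF x a] lev_char[OF x b] by auto
  moreover have "real (lev x a) / real n = real (lev x b) / real n"
    using fun_cong[OF e, of x] x by (simp add: eta_def)
  ultimately show False using np by simp
qed

lemma eta_unique:
  assumes h: "pmv_hom A PP h" and hi: "\<forall>e\<in>Lc. h e = idem_point A e" and a: "a \<in> carrier A"
  shows "h a = eta a"
proof -
  have ha: "h a \<in> carrier PP" using h a by (simp add: pmv_hom_def)
  then have ext: "h a \<in> extensional X"
    and cont: "continuous_map (dual_topology (skeleton A)) (discrete_topology (carrier (PL n))) (h a)"
    by (simp_all add: priestley_power_def Let_def)
  show ?thesis
  proof (rule extensionalityI[OF ext])
    show "eta a \<in> extensional X" by (simp add: eta_def)
    fix x assume x: "x \<in> X"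
    have "h a x \<in> carrier (PL n)" using cont x unfolding continuous_map_def by (auto simp: top_dual)
    then obtain j where j: "j \<le> n" "h a x = real j / real n" by (auto simp: PL_def)
    have "\<forall>m. x (th m a) \<longleftrightarrow> m \<le> j"
    proof
      fix m
      have e1: "h (th m a) = idem_point A (th m a)" using hi Lc_th[OF a] by simp
      have "h (th m a) = peval PP (\<lambda>i. h a) (thr n m (PVar 0))"
        unfolding tA_def using hom_peval[OF struct h, of "\<lambda>_. a"] a by simp
      then have "h (th m a) x = peval (PL n) (\<lambda>i. h a x) (thr n m (PVar 0))"
        using pp_peval[OF x] by simp
      also have "\<dots> = (if m \<le> j then 1 else 0)"
        by (rule thr_PL[OF n1 j(1)]) (simp add: j(2))
      finally have "(if x (th m a) then 1 else 0) = (if m \<le> j then 1 else (0::real))"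
        using e1 x by (simp add: idem_point_def)
      then show "x (th m a) \<longleftrightarrow> m \<le> j" by (auto split: if_splits)
    qed
    then have "lev x a = j" by (rule lev_unique[OF x a])
    then show "h a x = eta a x" using j x by (simp add: eta_def)
  qed
qed

end

theorem corollary4p8:
  fixes n :: nat and A :: "'a pmv_alg"
  assumes "n \<ge> 1" and "A \<in> PMV n"
  shows "\<exists>\<eta>. pmv_hom A (priestley_power n (skeleton A)) \<eta>
            \<and> inj_on \<eta> (carrier A)
            \<and> (\<forall>e\<in>lcarrier (skeleton A). \<eta> e = idem_point A e)
            \<and> (\<forall>\<eta>'. pmv_hom A (priestley_power n (skeleton A)) \<eta>'
                   \<and> (\<forall>e\<in>lcarrier (skeleton A). \<eta>' e = idem_point A e)
                   \<longrightarrow> (\<forall>a\<in>carrier A. \<eta>' a = \<eta> a))"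
proof -
  interpret P: pmvn A n using assms by unfold_locales auto
  show ?thesis
    using P.eta_hom P.eta_inj P.eta_idem P.eta_unique by blast
qed

end
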